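(* Let $A=(a_{ij})\in\overline{\mathbb{R}}^{n\times n}$. Then $A$ is pseudo-diagonalizable if and only if $A$ is finite and for all $i,j,k\in[n]$ with $k\neq i$ and $k\neq j$, $$a_{ik}+a_{kj}=\begin{cases} a_{ij} & \text{if } i\neq j,\\ 0 & \text{if } i=j.\end{cases}$$
   Context: Max-plus semiring: $\overline{\mathbb{R}}=\mathbb{R}\cup\{-\infty\}$ with $a\oplus b=\max\{a,b\}$, $a\otimes b=a+b$, $\varepsilon=-\infty$. Matrix operations: $(A\oplus B)_{ij}=\max(A_{ij},B_{ij})$, $(A\otimes B)_{ij}=\max_k(A_{ik}+B_{kj})$. $[n]=\{1,\dots,n\}$. A matrix is finite if all its entries are real. $I$ denotes the $n\times n$ matrix with $0$ on the diagonal and $\varepsilon$ elsewhere; $P\in\overline{\mathbb{R}}^{n\times n}$ is invertible if there is $Q$ with $P\otimes Q=Q\otimes P=I$ (equivalently, $P$ is a generalized permutation matrix: exactly one real entry in each row and each column, all other entries $\varepsilon$). Matrices $A,B\in\overline{\mathbb{R}}^{n\times n}$ are similar if $B=P^{-1}\otimes A\otimes P$ for some invertible $P$. A square matrix is pseudo-diagonal if its diagonal entries are real numbers and all its off-diagonal entries equal the real number $0$; $\mathrm{pdiag}(d_1,\dots,d_n)$ denotes the pseudo-diagonal matrix with diagonal entries $d_1,\dots,d_n$. A square matrix is pseudo-diagonalizable if it is similar to a pseudo-diagonal matrix. *)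

theory Defs
  imports "HOL-Library.Extended_Real"
begin

text \<open>Max-plus matrices: entries in ereal, restricted to R \<union> {-\<infinity>}
  (the entry +\<infinity> is excluded by the predicate mp_matrix). Indices range over a finite type 'n.\<close>

type_synonym 'n mpmat = "'n \<Rightarrow> 'n \<Rightarrow> ereal"

definition mp_matrix :: "('n::finite) mpmat \<Rightarrow> bool" where
  "mp_matrix A \<longleftrightarrow> (\<forall>i j. A i j \<noteq> \<infinity>)"

definition mp_mult :: "('n::finite) mpmat \<Rightarrow> 'n mpmat \<Rightarrow> 'n mpmat" (infixl "\<otimes>\<^sub>m\<^sub>p" 70) where
  "mp_mult A B = (\<lambda>i j. Max (range (\<lambda>k. A i k + B k j)))"

definition mp_id :: "('n::finite) mpmat" where
  "mp_id = (\<lambda>i j. if i = j then 0 else -\<infinity>)"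

definition mp_invertible :: "('n::finite) mpmat \<Rightarrow> bool" where
  "mp_invertible P \<longleftrightarrow> mp_matrix P \<and>
     (\<exists>Q. mp_matrix Q \<and> P \<otimes>\<^sub>m\<^sub>p Q = mp_id \<and> Q \<otimes>\<^sub>m\<^sub>p P = mp_id)"

definition mp_similar :: "('n::finite) mpmat \<Rightarrow> 'n mpmat \<Rightarrow> bool" where
  "mp_similar A B \<longleftrightarrow> (\<exists>P Q. mp_matrix P \<and> mp_matrix Q \<and>
       P \<otimes>\<^sub>m\<^sub>p Q = mp_id \<and> Q \<otimes>\<^sub>m\<^sub>p P = mp_id \<and> B = Q \<otimes>\<^sub>m\<^sub>p A \<otimes>\<^sub>m\<^sub>p P)"

definition mp_finite :: "('n::finite) mpmat \<Rightarrow> bool" where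
  "mp_finite A \<longleftrightarrow> (\<forall>i j. \<bar>A i j\<bar> \<noteq> \<infinity>)"

definition pseudo_diagonal :: "('n::finite) mpmat \<Rightarrow> bool" where
  "pseudo_diagonal D \<longleftrightarrow> (\<forall>i. \<bar>D i i\<bar> \<noteq> \<infinity>) \<and> (\<forall>i j. i \<noteq> j \<longrightarrow> D i j = 0)"

definition pseudo_diagonalizable :: "('n::finite) mpmat \<Rightarrow> bool" where
  "pseudo_diagonalizable A \<longleftrightarrow> (\<exists>D. pseudo_diagonal D \<and> mp_similar A D)"

end

theory Submission
  imports Defs
begin

lemma max_single:
  fixes f :: "'n::finite \<Rightarrow> ereal"
  assumes "\<And>k. k \<noteq> k0 \<Longrightarrow> f k = -\<infinity>"
  shows "Max (range f) = f k0"
proof (rule Max_eqI)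
  show "finite (range f)" by simp
  show "\<And>y. y \<in> range f \<Longrightarrow> y \<le> f k0" using assms by fastforce
  show "f k0 \<in> range f" by simp
qed

lemma Max_range_ge: "(f::'n::finite \<Rightarrow> ereal) k \<le> Max (range f)"
  by (rule Max_ge) auto

lemma Max_range_in: "Max (range (f::'n::finite \<Rightarrow> ereal)) \<in> range f"
  by (rule Max_in) auto

lemma inv_struct:
  fixes P Q :: "('n::finite) mpmat"
  assumes mP: "mp_matrix P" and mQ: "mp_matrix Q" and PQ: "P \<otimes>\<^sub>m\<^sub>p Q = mp_id"
  shows "\<exists>\<sigma> p. bij \<sigma> \<and> (\<forall>i k. P i k \<noteq> -\<infinity> \<longleftrightarrow> k = \<sigma> i) \<and> (\<forall>i. P i (\<sigma> i) = ereal (p i))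
     \<and> (\<forall>k i. Q k i \<noteq> -\<infinity> \<longleftrightarrow> k = \<sigma> i) \<and> (\<forall>i. Q (\<sigma> i) i = ereal (- p i))"
proof -
  have PQij: "Max (range (\<lambda>k. P i k + Q k j)) = (if i = j then 0 else -\<infinity>)" for i j
    using fun_cong[OF fun_cong[OF PQ, of i], of j] unfolding mp_mult_def mp_id_def by simp
  have ex: "\<exists>k. P i k + Q k i = 0" for i
  proof -
    obtain k where "Max (range (\<lambda>k. P i k + Q k i)) = P i k + Q k i"
      using Max_range_in[of "\<lambda>k. P i k + Q k i"] by blast
    thus ?thesis using PQij[of i i] by auto
  qed
  define \<sigma> where "\<sigma> i = (SOME k. P i k + Q k i = 0)" for i
  have s0: "P i (\<sigma> i) + Q (\<sigma> i) i = 0" for i unfolding \<sigma>_def using ex by (rule someI_ex)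
  have fin: "\<exists>a b. P i (\<sigma> i) = ereal a \<and> Q (\<sigma> i) i = ereal b \<and> a + b = 0" for i
  proof -
    have "P i (\<sigma> i) \<noteq> \<infinity>" "Q (\<sigma> i) i \<noteq> \<infinity>" using mP mQ unfolding mp_matrix_def by auto
    with s0[of i] show ?thesis
      by (cases "P i (\<sigma> i)"; cases "Q (\<sigma> i) i"; auto)
  qed
  define pa where "pa i = real_of_ereal (P i (\<sigma> i))" for i
  define qb where "qb i = real_of_ereal (Q (\<sigma> i) i)" for i
  have pq: "\<And>i. P i (\<sigma> i) = ereal (pa i)" "\<And>i. Q (\<sigma> i) i = ereal (qb i)"
    "\<And>i. pa i + qb i = 0"
  proof -
    fix i
    from fin[of i] obtain a b where ab: "P i (\<sigma> i) = ereal a" "Q (\<sigma> i) i = ereal b" "a + b = 0" by blast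
    show "P i (\<sigma> i) = ereal (pa i)" "Q (\<sigma> i) i = ereal (qb i)" "pa i + qb i = 0"
      using ab by (auto simp: pa_def qb_def)
  qed
  have off: "P i k = -\<infinity> \<or> Q k j = -\<infinity>" if "i \<noteq> j" for i j k
  proof -
    have "P i k + Q k j \<le> -\<infinity>" using Max_range_ge[of "\<lambda>k. P i k + Q k j" k] PQij[of i j] that by simp
    moreover have "P i k \<noteq> \<infinity>" "Q k j \<noteq> \<infinity>" using mP mQ unfolding mp_matrix_def by auto
    ultimately show ?thesis by (cases "P i k"; cases "Q k j"; auto)
  qed
  have col: "P j (\<sigma> i) = -\<infinity>" if "j \<noteq> i" for i j
    using off[OF that, of "\<sigma> i"] pq(2)[of i] by auto
  have inj: "inj \<sigma>"
  proof (rule injI)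
    fix x y assume "\<sigma> x = \<sigma> y"
    show "x = y"
    proof (rule ccontr)
      assume "x \<noteq> y"
      then have "P y (\<sigma> x) = -\<infinity>" using col by auto
      with \<open>\<sigma> x = \<sigma> y\<close> pq(1)[of y] show False by simp
    qed
  qed
  hence bij: "bij \<sigma>" using finite_UNIV_inj_surj[of \<sigma>] by (simp add: bij_def)
  have rowP: "P i k \<noteq> -\<infinity> \<longleftrightarrow> k = \<sigma> i" for i k
  proof
    assume h: "P i k \<noteq> -\<infinity>"
    obtain j where kj: "k = \<sigma> j" using bij unfolding bij_def surj_def by blast
    show "k = \<sigma> i" using col[of i j] h kj by (cases "i = j") auto
  next
    assume "k = \<sigma> i" thus "P i k \<noteq> -\<infinity>" using pq(1) by simp
  qed
  have rowQ: "Q k i \<noteq> -\<infinity> \<longleftrightarrow> k = \<sigma> i" for i k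
  proof
    assume h: "Q k i \<noteq> -\<infinity>"
    obtain j where kj: "k = \<sigma> j" using bij unfolding bij_def surj_def by blast
    show "k = \<sigma> i"
    proof (rule ccontr)
      assume "k \<noteq> \<sigma> i" hence "j \<noteq> i" using kj by auto
      from off[OF this, of k] h kj pq(1)[of j] show False by simp
    qed
  next
    assume "k = \<sigma> i" thus "Q k i \<noteq> -\<infinity>" using pq(2) by simp
  qed
  have "\<forall>i. Q (\<sigma> i) i = ereal (- pa i)" 
  proof
    fix i have "qb i = - pa i" using pq(3)[of i] by linarith
    thus "Q (\<sigma> i) i = ereal (- pa i)" using pq(2) by simp
  qed
  with bij rowP rowQ pq(1) show ?thesis by blast
qed

theorem theorem3p3:
  fixes A :: "('n::finite) mpmat"
  assumes "mp_matrix A"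
  shows "pseudo_diagonalizable A \<longleftrightarrow>
    (mp_finite A \<and>
     (\<forall>i j k. k \<noteq> i \<and> k \<noteq> j \<longrightarrow>
        A i k + A k j = (if i \<noteq> j then A i j else 0)))"
proof
  assume "pseudo_diagonalizable A"
  then obtain D P Q where pd: "pseudo_diagonal D" and mP: "mp_matrix P" and mQ: "mp_matrix Q"
    and PQ: "P \<otimes>\<^sub>m\<^sub>p Q = mp_id" and D: "D = Q \<otimes>\<^sub>m\<^sub>p A \<otimes>\<^sub>m\<^sub>p P"
    unfolding pseudo_diagonalizable_def mp_similar_def by blast
  obtain \<sigma> p where bij: "bij \<sigma>" and rP: "\<And>i k. P i k \<noteq> -\<infinity> \<longleftrightarrow> k = \<sigma> i"
    and Pv: "\<And>i. P i (\<sigma> i) = ereal (p i)" and rQ: "\<And>k i. Q k i \<noteq> -\<infinity> \<longleftrightarrow> k = \<sigma> i"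
    and Qv: "\<And>i. Q (\<sigma> i) i = ereal (- p i)"
    using inv_struct[OF mP mQ PQ] by blast
  have inj: "\<sigma> a = \<sigma> b \<longleftrightarrow> a = b" for a b using bij by (meson bij_def inj_eq)
  have An: "A i j \<noteq> \<infinity>" for i j using assms unfolding mp_matrix_def by auto
  have QA: "(Q \<otimes>\<^sub>m\<^sub>p A) (\<sigma> a) y = ereal (- p a) + A a y" for a y
  proof -
    have "Max (range (\<lambda>k. Q (\<sigma> a) k + A k y)) = Q (\<sigma> a) a + A a y"
    proof (rule max_single)
      fix k assume "k \<noteq> a"
      hence "\<sigma> a \<noteq> \<sigma> k" using inj by simp
      hence "Q (\<sigma> a) k = -\<infinity>" using rQ[where k="\<sigma> a" and i=k] by simp
      thus "Q (\<sigma> a) k + A k y = -\<infinity>" using An[of k y] by simp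
    qed
    moreover have "(Q \<otimes>\<^sub>m\<^sub>p A) (\<sigma> a) y = Max (range (\<lambda>k. Q (\<sigma> a) k + A k y))"
      by (simp only: mp_mult_def)
    ultimately show ?thesis by (simp only: Qv)
  qed
  have Dv: "D (\<sigma> a) (\<sigma> b) = ereal (- p a) + A a b + ereal (p b)" for a b
  proof -
    have "Max (range (\<lambda>y. (Q \<otimes>\<^sub>m\<^sub>p A) (\<sigma> a) y + P y (\<sigma> b))) = (Q \<otimes>\<^sub>m\<^sub>p A) (\<sigma> a) b + P b (\<sigma> b)"
    proof (rule max_single)
      fix y assume "y \<noteq> b"
      hence "\<sigma> b \<noteq> \<sigma> y" using inj by simp
      hence "P y (\<sigma> b) = -\<infinity>" using rP[where i=y and k="\<sigma> b"] by simp
      moreover have "(Q \<otimes>\<^sub>m\<^sub>p A) (\<sigma> a) y \<noteq> \<infinity>" using QA An[of a y] by simp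
      ultimately show "(Q \<otimes>\<^sub>m\<^sub>p A) (\<sigma> a) y + P y (\<sigma> b) = -\<infinity>" by simp
    qed
    moreover have "D (\<sigma> a) (\<sigma> b) = Max (range (\<lambda>y. (Q \<otimes>\<^sub>m\<^sub>p A) (\<sigma> a) y + P y (\<sigma> b)))"
      unfolding D by (simp only: mp_mult_def[of "Q \<otimes>\<^sub>m\<^sub>p A" P])
    ultimately show ?thesis by (simp only: QA Pv)
  qed
  have Aoff: "A a b = ereal (p a - p b)" if "a \<noteq> b" for a b
  proof -
    have "D (\<sigma> a) (\<sigma> b) = 0" using pd that inj unfolding pseudo_diagonal_def by blast
    with Dv[of a b] have e: "ereal (- p a) + A a b + ereal (p b) = 0" by simp
    show ?thesis
    proof (cases "A a b")
      case (real r)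
      with e have "- p a + r + p b = 0" by simp
      hence "r = p a - p b" by linarith
      thus ?thesis using real by simp
    qed (use e An[of a b] in auto)
  qed
  have Adiag: "\<bar>A a a\<bar> \<noteq> \<infinity>" for a
  proof -
    have "\<bar>D (\<sigma> a) (\<sigma> a)\<bar> \<noteq> \<infinity>" using pd unfolding pseudo_diagonal_def by auto
    with Dv[of a a] have e: "\<bar>ereal (- p a) + A a a + ereal (p a)\<bar> \<noteq> \<infinity>" by simp
    show ?thesis using e An[of a a] by (cases "A a a") simp_all
  qed
  have "mp_finite A" unfolding mp_finite_def
  proof (intro allI)
    fix i j show "\<bar>A i j\<bar> \<noteq> \<infinity>"
    proof (cases "i = j")
      case True thus ?thesis using Adiag by simp
    next
      case False thus ?thesis using Aoff[OF False] by simp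
    qed
  qed
  moreover have "\<forall>i j k. k \<noteq> i \<and> k \<noteq> j \<longrightarrow> A i k + A k j = (if i \<noteq> j then A i j else 0)"
  proof (intro allI impI)
    fix i j k :: 'n assume k: "k \<noteq> i \<and> k \<noteq> j"
    hence "A i k + A k j = ereal (p i - p j)" using k Aoff[of i k] Aoff[of k j] by auto
    thus "A i k + A k j = (if i \<noteq> j then A i j else 0)"
      using Aoff[of i j] by (simp add: zero_ereal_def)
  qed
  ultimately show "mp_finite A \<and> (\<forall>i j k. k \<noteq> i \<and> k \<noteq> j \<longrightarrow> A i k + A k j = (if i \<noteq> j then A i j else 0))" ..
next
  assume h: "mp_finite A \<and> (\<forall>i j k. k \<noteq> i \<and> k \<noteq> j \<longrightarrow> A i k + A k j = (if i \<noteq> j then A i j else 0))"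
  define a where "a i j = real_of_ereal (A i j)" for i j
  have Aa: "A i j = ereal (a i j)" for i j
    using h unfolding mp_finite_def a_def by (simp add: ereal_real')
  have cond: "k \<noteq> i \<Longrightarrow> k \<noteq> j \<Longrightarrow> a i k + a k j = (if i \<noteq> j then a i j else 0)" for i j k
  proof -
    assume "k \<noteq> i" "k \<noteq> j"
    hence e: "ereal (a i k) + ereal (a k j) = (if i \<noteq> j then ereal (a i j) else 0)"
      using h unfolding Aa by blast
    show ?thesis using e by (cases "i = j") (simp_all add: zero_ereal_def)
  qed
  define r :: 'n where "r = undefined"
  define p where "p i = (if i = r then 0 else a i r)" for i
  have pdiff: "a i j = p i - p j" if "i \<noteq> j" for i j
  proof (cases "i = r")
    case True
    then show ?thesis using cond[where i=r and j=r and k=j] that p_def by auto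
  next
    case F: False
    show ?thesis
    proof (cases "j = r")
      case True then show ?thesis using F p_def by auto
    next
      case False
      have "a i r + a r j = a i j" using cond[where i=i and j=j and k=r] F False that by auto
      moreover have "a j r + a r j = 0" using cond[where i=j and j=j and k=r] False by auto
      ultimately show ?thesis using F False p_def by auto
    qed
  qed
  define P :: "'n mpmat" where "P i j = (if i = j then ereal (p i) else -\<infinity>)" for i j
  define Q :: "'n mpmat" where "Q i j = (if i = j then ereal (- p i) else -\<infinity>)" for i j
  define D :: "'n mpmat" where "D i j = (if i = j then A i i else 0)" for i j
  have PQ: "P \<otimes>\<^sub>m\<^sub>p Q = mp_id"
  proof (intro ext)
    fix i j
    have "Max (range (\<lambda>k. P i k + Q k j)) = P i i + Q i j"
      by (rule max_single) (auto simp: P_def Q_def)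
    thus "(P \<otimes>\<^sub>m\<^sub>p Q) i j = mp_id i j" unfolding mp_mult_def mp_id_def by (auto simp: P_def Q_def)
  qed
  have QP: "Q \<otimes>\<^sub>m\<^sub>p P = mp_id"
  proof (intro ext)
    fix i j
    have "Max (range (\<lambda>k. Q i k + P k j)) = Q i i + P i j"
      by (rule max_single) (auto simp: P_def Q_def)
    thus "(Q \<otimes>\<^sub>m\<^sub>p P) i j = mp_id i j" unfolding mp_mult_def mp_id_def by (auto simp: P_def Q_def)
  qed
  have QA: "(Q \<otimes>\<^sub>m\<^sub>p A) x y = ereal (- p x + a x y)" for x y
  proof -
    have "Max (range (\<lambda>k. Q x k + A k y)) = Q x x + A x y"
      by (rule max_single) (auto simp: Q_def Aa)
    thus ?thesis unfolding mp_mult_def by (simp add: Q_def Aa)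
  qed
  have DQAP: "D = Q \<otimes>\<^sub>m\<^sub>p A \<otimes>\<^sub>m\<^sub>p P"
  proof (intro ext)
    fix x z
    have "Max (range (\<lambda>y. (Q \<otimes>\<^sub>m\<^sub>p A) x y + P y z)) = (Q \<otimes>\<^sub>m\<^sub>p A) x z + P z z"
      by (rule max_single) (auto simp: P_def QA)
    hence "(Q \<otimes>\<^sub>m\<^sub>p A \<otimes>\<^sub>m\<^sub>p P) x z = ereal (- p x + a x z + p z)"
      unfolding mp_mult_def[of "Q \<otimes>\<^sub>m\<^sub>p A"] by (simp add: QA P_def)
    thus "D x z = (Q \<otimes>\<^sub>m\<^sub>p A \<otimes>\<^sub>m\<^sub>p P) x z"
      using pdiff[of x z] by (auto simp: D_def Aa zero_ereal_def)
  qed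
  have "pseudo_diagonal D" unfolding pseudo_diagonal_def D_def by (simp add: Aa)
  moreover have "mp_matrix P" "mp_matrix Q" unfolding mp_matrix_def P_def Q_def by auto
  ultimately show "pseudo_diagonalizable A"
    unfolding pseudo_diagonalizable_def mp_similar_def using PQ QP DQAP by blast
qed

end
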